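(* Let $n\ge2$ and let $F$ be a field. For $\lambda\in F^\times$ let $m_{\lambda,n}$ be the diagonal $n\times n$ matrix with first diagonal entry $\lambda^{-(n-1)}$ and remaining diagonal entries $\lambda$, and let $E=\{m_{\lambda,n}:\lambda\in F^\times\}\le\mathrm{SL}_n(F)$. Let $X$ be the set of matrices $a\in\mathrm{GL}_n(F)$ such that $\dim\ker(a-\lambda1_n)\le\dim\ker(a-1_n)+2$ for all $\lambda\in F^\times$. Then $\mathrm{GL}_n(F)=EX=\{ex: e\in E,\ x\in X\}$. *)

theory Defs
  imports "Jordan_Normal_Form.Matrix_Kernel"
begin

definition GL_set :: "nat \<Rightarrow> 'a :: field mat set" where
  "GL_set n = {a. a \<in> carrier_mat n n \<and> invertible_mat a}"

definition m_mat :: "'a :: field \<Rightarrow> nat \<Rightarrow> 'a mat" where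
  "m_mat l n = mat_diag n (\<lambda>i. if i = 0 then inverse l ^ (n - 1) else l)"

definition E_set :: "nat \<Rightarrow> 'a :: field mat set" where
  "E_set n = {m_mat l n | l. l \<noteq> 0}"

definition X_set :: "nat \<Rightarrow> 'a :: field mat set" where
  "X_set n = {a \<in> GL_set n. \<forall>l. l \<noteq> 0 \<longrightarrow>
      kernel_dim (a - l \<cdot>\<^sub>m 1\<^sub>m n) \<le> kernel_dim (a - 1\<^sub>m n) + 2}"

end

theory Submission
  imports Defs
begin

lemma (in vectorspace) subspace_dim_le:
  assumes fd: fin_dim and sub: "submodule K W V"
  shows "vectorspace.fin_dim K (vs W)" "vectorspace.dim K (vs W) \<le> dim"
proof -
  interpret Wv: vectorspace K "vs W" using sub by (intro subspace_is_vs) (auto simp: subspace_def vectorspace_axioms)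
  have WC: "W \<subseteq> carrier V" using sub by (auto simp: submodule_def)
  have li: "Wv.lin_dep S = lin_dep S" if "S \<subseteq> W" for S
    using span_li_not_depend(2)[OF that sub] .
  let ?P = "\<lambda>S. S \<subseteq> carrier (vs W) \<and> Wv.lin_indpt S"
  have bnd: "finite S \<and> card S \<le> dim" if "?P S" for S
    using li_le_dim[OF fd, of S] that li WC by auto
  have "?P {}" using li[of "{}"] by (auto simp: lin_dep_def)
  from maximal_exists[of ?P, OF bnd this] obtain A where A: "finite A" "maximal A ?P" by blast
  have bas: "Wv.basis A" by (rule Wv.max_li_is_basis[OF A(2)])
  show "Wv.fin_dim" using A(1) bas unfolding Wv.fin_dim_def Wv.basis_def by auto
  have "Wv.dim = card A" by (rule Wv.dim_basis[OF A(1) bas])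
  also have "\<dots> \<le> dim" using bnd A(2) unfolding maximal_def by auto
  finally show "Wv.dim \<le> dim" .
qed

lemma kernel_dim_le_plus1:
  fixes A B :: "'a::field mat"
  assumes A: "A \<in> carrier_mat n n" and B: "B \<in> carrier_mat n n"
  and n: "0 < n" and sub: "\<And>v. v \<in> mat_kernel A \<Longrightarrow> v $ 0 = 0 \<Longrightarrow> v \<in> mat_kernel B"
  shows "kernel_dim A \<le> kernel_dim B + 1"
proof -
  interpret KA: kernel n n A by (unfold_locales, rule A)
  interpret KB: kernel n n B by (unfold_locales, rule B)
  interpret N1: vec_space "TYPE('a)" 1 .
  define T where "T = (\<lambda>v::'a vec. vec 1 (\<lambda>_. v $ 0))"
  have lm: "linear_map class_ring KA.VK N1.V T"
    apply (intro linear_map.intro mod_hom.intro mod_hom_axioms.intro)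
    apply (rule KA.Ker.vectorspace_axioms)
    apply (rule N1.vectorspace_axioms)
    apply (rule KA.Ker.module_axioms)
    apply (rule N1.module_axioms)
    unfolding LinearCombinations.module_hom_def T_def
    using A n apply (auto simp: mat_kernel_def module_vec_simps class_ring_simps Pi_def intro!: eq_vecI)
    done
  interpret L: linear_map class_ring KA.VK N1.V T by (rule lm)
  have fdA: "KA.Ker.fin_dim"
    using kernel_basis_exists[OF A] unfolding KA.Ker.fin_dim_def KA.Ker.basis_def by auto
  have fdB: "KB.Ker.fin_dim"
    using kernel_basis_exists[OF B] unfolding KB.Ker.fin_dim_def KB.Ker.basis_def by auto
  have rn: "vectorspace.dim class_ring (N1.vs L.imT) + vectorspace.dim class_ring (KA.Ker.vs L.kerT) = KA.dim"
    by (rule L.rank_nullity[OF fdA])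
  have "vectorspace.dim class_ring (N1.vs L.imT) \<le> N1.dim"
    by (rule N1.subspace_dim_le(2)[OF N1.fin_dim L.im_is_submodule])
  hence im1: "vectorspace.dim class_ring (N1.vs L.imT) \<le> 1" using N1.dim_is_n by simp
  have kerA: "submodule class_ring L.kerT KA.VK" by (rule L.ker_is_submodule)
  have kersub: "L.kerT \<subseteq> mat_kernel B"
  proof
    fix v assume "v \<in> L.kerT"
    hence v: "v \<in> mat_kernel A" "T v = 0\<^sub>v 1" unfolding L.ker_def by (auto simp: module_vec_simps)
    have "v $ 0 = 0" using arg_cong[OF v(2), of "\<lambda>w. w $ 0"] unfolding T_def by simp
    thus "v \<in> mat_kernel B" using sub v(1) by blast
  qed
  have kerB: "submodule class_ring L.kerT KB.VK"
    using kerA kersub KB.Ker.module_axioms unfolding submodule_def by auto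
  have "vectorspace.dim class_ring (KB.Ker.vs L.kerT) \<le> KB.dim"
    by (rule KB.Ker.subspace_dim_le(2)[OF fdB kerB])
  moreover have "KB.Ker.vs L.kerT = KA.Ker.vs L.kerT" by simp
  ultimately have "KA.dim \<le> KB.dim + 1" using rn im1 by simp
  thus ?thesis using KA.kernel_dim KB.kernel_dim by simp
qed

lemma m_mat_carrier[simp]: "m_mat l n \<in> carrier_mat n n"
  unfolding m_mat_def by simp

lemma m_mat_vec:
  assumes v: "v \<in> carrier_vec n" and v0: "v $ 0 = 0"
  shows "m_mat l n *\<^sub>v v = l \<cdot>\<^sub>v v"
proof (rule eq_vecI)
  fix i assume "i < dim_vec (l \<cdot>\<^sub>v v)"
  hence i: "i < n" using v by simp
  have "(m_mat l n *\<^sub>v v) $ i = (\<Sum>j<n. (if i = j then (if j = 0 then inverse l ^ (n - 1) else l) else 0) * v $ j)"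
    using i v unfolding m_mat_def mat_diag_def mult_mat_vec_def scalar_prod_def
    by (simp add: lessThan_atLeast0)
  also have "\<dots> = (if i = 0 then inverse l ^ (n - 1) else l) * v $ i"
  proof -
    have "(\<Sum>j<n. (if i = j then (if j = 0 then inverse l ^ (n - 1) else l) else 0) * v $ j)
       = (\<Sum>j<n. if i = j then (if j = 0 then inverse l ^ (n - 1) else l) * v $ j else 0)"
      by (rule sum.cong) auto
    also have "\<dots> = (if i = 0 then inverse l ^ (n - 1) else l) * v $ i"
      using i by (subst sum.delta') auto
    finally show ?thesis .
  qed
  also have "\<dots> = (l \<cdot>\<^sub>v v) $ i" using i v v0 by auto
  finally show "(m_mat l n *\<^sub>v v) $ i = (l \<cdot>\<^sub>v v) $ i" .
qed (use v in \<open>auto simp: m_mat_def mat_diag_def\<close>)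

lemma smult_mat_vec:
  assumes "A \<in> carrier_mat nr nc" "v \<in> carrier_vec nc"
  shows "(k \<cdot>\<^sub>m A) *\<^sub>v v = k \<cdot>\<^sub>v (A *\<^sub>v v)"
proof (rule eq_vecI)
  fix i assume "i < dim_vec (k \<cdot>\<^sub>v (A *\<^sub>v v))"
  hence i: "i < nr" using assms by simp
  have "(k \<cdot>\<^sub>m A *\<^sub>v v) $ i = (k \<cdot>\<^sub>v row A i) \<bullet> v" using i assms by simp
  also have "\<dots> = k * (row A i \<bullet> v)" unfolding scalar_prod_def using i assms by (auto simp: sum_distrib_left ac_simps)
  finally show "(k \<cdot>\<^sub>m A *\<^sub>v v) $ i = (k \<cdot>\<^sub>v (A *\<^sub>v v)) $ i" using i assms by simp
qed (use assms in auto)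

lemma shift_vec:
  assumes M: "M \<in> carrier_mat n n" and v: "v \<in> carrier_vec n" and v0: "v $ 0 = 0"
  shows "(M - c \<cdot>\<^sub>m m_mat l n) *\<^sub>v v = (M - (c * l) \<cdot>\<^sub>m 1\<^sub>m n) *\<^sub>v v"
proof -
  have "(M - c \<cdot>\<^sub>m m_mat l n) *\<^sub>v v = M *\<^sub>v v - c \<cdot>\<^sub>v (l \<cdot>\<^sub>v v)"
    using M v v0 by (simp add: minus_mult_distrib_mat_vec smult_mat_vec[of _ n n] m_mat_vec)
  also have "\<dots> = (M - (c * l) \<cdot>\<^sub>m 1\<^sub>m n) *\<^sub>v v"
    using M v by (simp add: minus_mult_distrib_mat_vec smult_mat_vec[of _ n n] smult_smult_assoc)
  finally show ?thesis .
qed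

lemma invertible_intro:
  assumes "A \<in> carrier_mat n n" "B \<in> carrier_mat n n" "A * B = 1\<^sub>m n" "B * A = 1\<^sub>m n"
  shows "invertible_mat A"
  using assms unfolding invertible_mat_def inverts_mat_def square_mat.simps by auto

lemma invertible_dest:
  assumes "invertible_mat A" "A \<in> carrier_mat n n"
  obtains B where "B \<in> carrier_mat n n" "A * B = 1\<^sub>m n" "B * A = 1\<^sub>m n"
proof -
  from assms(1) obtain B where i1: "inverts_mat A B" and i2: "inverts_mat B A"
    unfolding invertible_mat_def by blast
  have AB: "A * B = 1\<^sub>m n" using i1 carrier_matD(1)[OF assms(2)] unfolding inverts_mat_def by metis
  have BA: "B * A = 1\<^sub>m (dim_row B)" using i2 unfolding inverts_mat_def by metis
  have c: "dim_col B = n" by (metis AB index_mult_mat(3) index_one_mat(3))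
  have r: "dim_row B = n" by (metis BA index_mult_mat(3) index_one_mat(3) carrier_matD(2) assms(2))
  have Bc: "B \<in> carrier_mat n n" by (rule carrier_matI[OF r c])
  have BA': "B * A = 1\<^sub>m n" by (metis BA r)
  show ?thesis by (rule that[OF Bc AB BA'])
qed

lemma invertible_mult:
  assumes A: "A \<in> carrier_mat n n" and B: "B \<in> carrier_mat n n"
    and iA: "invertible_mat A" and iB: "invertible_mat B"
  shows "invertible_mat (A * B)"
proof -
  obtain A' where A': "A' \<in> carrier_mat n n" "A * A' = 1\<^sub>m n" "A' * A = 1\<^sub>m n"
    using invertible_dest[OF iA A] by blast
  obtain B' where B': "B' \<in> carrier_mat n n" "B * B' = 1\<^sub>m n" "B' * B = 1\<^sub>m n"
    using invertible_dest[OF iB B] by blast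
  have "A * B * (B' * A') = A * (B * (B' * A'))"
    by (rule assoc_mult_mat[OF A B mult_carrier_mat[OF B'(1) A'(1)]])
  also have "B * (B' * A') = (B * B') * A'"
    by (rule assoc_mult_mat[OF B B'(1) A'(1), symmetric])
  also have "\<dots> = A'" using B'(2) A'(1) by simp
  finally have 1: "A * B * (B' * A') = 1\<^sub>m n" using A'(2) by simp
  have "B' * A' * (A * B) = B' * (A' * (A * B))"
    by (rule assoc_mult_mat[OF B'(1) A'(1) mult_carrier_mat[OF A B]])
  also have "A' * (A * B) = (A' * A) * B"
    by (rule assoc_mult_mat[OF A'(1) A B, symmetric])
  also have "\<dots> = B" using A'(3) B by simp
  finally have 2: "B' * A' * (A * B) = 1\<^sub>m n" using B'(3) by simp
  show ?thesis by (rule invertible_intro[OF mult_carrier_mat[OF A B] mult_carrier_mat[OF B'(1) A'(1)] 1 2])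
qed

lemma m_mat_inv:
  assumes "l \<noteq> 0"
  shows "m_mat l n * m_mat (inverse l) n = 1\<^sub>m n"
proof -
  have F: "(\<lambda>i. (if i = 0 then inverse l ^ (n - 1) else l) *
            (if i = 0 then inverse (inverse l) ^ (n - 1) else inverse l)) = (\<lambda>_. 1)"
    using assms by (intro ext) (simp add: power_inverse)
  show ?thesis unfolding m_mat_def mat_diag_diag by (subst F) (rule mat_diag_one)
qed



lemma kernel_dim_cong: "mat_kernel A = mat_kernel B \<Longrightarrow> dim_col A = dim_col B \<Longrightarrow> kernel_dim A = kernel_dim B"
  unfolding kernel_dim_def by simp

theorem lemma3p1:
  fixes n :: nat
  assumes "n \<ge> 2"
  shows "(GL_set n :: 'a :: field mat set) = {e * x | e x. e \<in> E_set n \<and> x \<in> X_set n}"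
proof (intro equalityI subsetI)
  fix a :: "'a mat" assume "a \<in> GL_set n"
  hence aC: "a \<in> carrier_mat n n" and ai: "invertible_mat a" by (auto simp: GL_set_def)
  have n0: "0 < n" using assms by simp
  define f where "f = (\<lambda>l::'a. kernel_dim (a - l \<cdot>\<^sub>m 1\<^sub>m n))"
  have fb: "f l < n + 1" for l
  proof -
    have "f l \<le> dim_col (a - l \<cdot>\<^sub>m 1\<^sub>m n)" unfolding f_def kernel_dim_code by simp
    also have "\<dots> = n" using aC by simp
    finally show ?thesis by simp
  qed
  obtain l where l0: "l \<noteq> 0" and lmax: "\<And>\<mu>. \<mu> \<noteq> 0 \<Longrightarrow> f \<mu> \<le> f l"
    using Lattices_Big.ex_has_greatest_nat[of "\<lambda>l. l \<noteq> 0" 1 f "n + 1"] fb by auto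
  define e where "e = m_mat l n"
  define e' where "e' = m_mat (inverse l) n"
  have eC: "e \<in> carrier_mat n n" and e'C: "e' \<in> carrier_mat n n" unfolding e_def e'_def by simp_all
  have ee': "e * e' = 1\<^sub>m n" unfolding e_def e'_def by (rule m_mat_inv[OF l0])
  have e'e: "e' * e = 1\<^sub>m n" using m_mat_inv[of "inverse l" n] l0 unfolding e_def e'_def by simp
  define x where "x = e' * a"
  have xC: "x \<in> carrier_mat n n" unfolding x_def using e'C aC by simp
  have "e * x = (e * e') * a" unfolding x_def by (rule assoc_mult_mat[OF eC e'C aC, symmetric])
  also have "\<dots> = a" using ee' aC by simp
  finally have ax: "a = e * x" by simp
  have eE: "e \<in> E_set n" unfolding E_set_def e_def using l0 by blast
  have e'i: "invertible_mat e'" by (rule invertible_intro[OF e'C eC e'e ee'])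
  have xi: "invertible_mat x" unfolding x_def by (rule invertible_mult[OF e'C aC e'i ai])
  have kx: "kernel_dim (x - \<mu> \<cdot>\<^sub>m 1\<^sub>m n) = kernel_dim (a - \<mu> \<cdot>\<^sub>m e)" for \<mu>
  proof -
    have MC: "a - \<mu> \<cdot>\<^sub>m e \<in> carrier_mat n n" using eC by (intro minus_carrier_mat smult_carrier_mat)
    have "e' * (a - \<mu> \<cdot>\<^sub>m e) = e' * a - e' * (\<mu> \<cdot>\<^sub>m e)"
      by (rule mult_minus_distrib_mat[OF e'C aC]) (use eC in simp)
    also have "e' * (\<mu> \<cdot>\<^sub>m e) = \<mu> \<cdot>\<^sub>m (e' * e)" by (rule mult_smult_distrib[OF e'C eC])
    finally have eq: "e' * (a - \<mu> \<cdot>\<^sub>m e) = x - \<mu> \<cdot>\<^sub>m 1\<^sub>m n" unfolding x_def e'e .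
    have "mat_kernel (e' * (a - \<mu> \<cdot>\<^sub>m e)) = mat_kernel (a - \<mu> \<cdot>\<^sub>m e)"
      by (rule mat_kernel_mult_eq[OF MC e'C eC ee'])
    hence "mat_kernel (x - \<mu> \<cdot>\<^sub>m 1\<^sub>m n) = mat_kernel (a - \<mu> \<cdot>\<^sub>m e)" unfolding eq .
    thus ?thesis by (rule kernel_dim_cong) (use xC aC eC in simp)
  qed
  have step1: "kernel_dim (a - \<mu> \<cdot>\<^sub>m e) \<le> f (\<mu> * l) + 1" for \<mu>
    unfolding f_def
  proof (rule kernel_dim_le_plus1[OF _ _ n0])
    show "a - \<mu> \<cdot>\<^sub>m e \<in> carrier_mat n n" using eC by (intro minus_carrier_mat smult_carrier_mat)
    show "a - (\<mu> * l) \<cdot>\<^sub>m 1\<^sub>m n \<in> carrier_mat n n" by (intro minus_carrier_mat smult_carrier_mat one_carrier_mat)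
    fix v assume v: "v \<in> mat_kernel (a - \<mu> \<cdot>\<^sub>m e)" and v0: "v $ 0 = 0"
    have MC: "a - \<mu> \<cdot>\<^sub>m e \<in> carrier_mat n n" using eC by (intro minus_carrier_mat smult_carrier_mat)
    have vC: "v \<in> carrier_vec n" and z: "(a - \<mu> \<cdot>\<^sub>m e) *\<^sub>v v = 0\<^sub>v n"
      using mat_kernelD[OF MC v] by auto
    have "(a - (\<mu> * l) \<cdot>\<^sub>m 1\<^sub>m n) *\<^sub>v v = 0\<^sub>v n"
      using z shift_vec[OF aC vC v0, of \<mu> l] unfolding e_def by simp
    thus "v \<in> mat_kernel (a - (\<mu> * l) \<cdot>\<^sub>m 1\<^sub>m n)"
      by (rule mat_kernelI[OF minus_carrier_mat[OF smult_carrier_mat[OF one_carrier_mat]] vC])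
  qed
  have step2: "f l \<le> kernel_dim (a - 1 \<cdot>\<^sub>m e) + 1"
    unfolding f_def
  proof (rule kernel_dim_le_plus1[OF _ _ n0])
    show "a - 1 \<cdot>\<^sub>m e \<in> carrier_mat n n" using eC by (intro minus_carrier_mat smult_carrier_mat)
    show "a - l \<cdot>\<^sub>m 1\<^sub>m n \<in> carrier_mat n n" by (intro minus_carrier_mat smult_carrier_mat one_carrier_mat)
    fix v assume v: "v \<in> mat_kernel (a - l \<cdot>\<^sub>m 1\<^sub>m n)" and v0: "v $ 0 = 0"
    have MC: "a - l \<cdot>\<^sub>m 1\<^sub>m n \<in> carrier_mat n n" by (intro minus_carrier_mat smult_carrier_mat one_carrier_mat)
    have vC: "v \<in> carrier_vec n" and z: "(a - l \<cdot>\<^sub>m 1\<^sub>m n) *\<^sub>v v = 0\<^sub>v n"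
      using mat_kernelD[OF MC v] by auto
    have "(a - 1 \<cdot>\<^sub>m e) *\<^sub>v v = 0\<^sub>v n"
      using z shift_vec[OF aC vC v0, of 1 l] unfolding e_def by simp
    thus "v \<in> mat_kernel (a - 1 \<cdot>\<^sub>m e)"
      by (rule mat_kernelI[OF minus_carrier_mat[OF smult_carrier_mat[OF eC]] vC])
  qed
  have one: "(1::'a) \<cdot>\<^sub>m 1\<^sub>m n = 1\<^sub>m n" by (rule eq_matI) auto
  have xX: "x \<in> X_set n"
    unfolding X_set_def GL_set_def
  proof (intro CollectI conjI allI impI xC xi)
    fix \<mu> :: 'a assume \<mu>: "\<mu> \<noteq> 0"
    have "kernel_dim (x - \<mu> \<cdot>\<^sub>m 1\<^sub>m n) = kernel_dim (a - \<mu> \<cdot>\<^sub>m e)" by (rule kx)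
    also have "\<dots> \<le> f (\<mu> * l) + 1" by (rule step1)
    also have "\<dots> \<le> f l + 1" using lmax[of "\<mu> * l"] \<mu> l0 by simp
    also have "\<dots> \<le> kernel_dim (a - 1 \<cdot>\<^sub>m e) + 2" using step2 by simp
    also have "kernel_dim (a - 1 \<cdot>\<^sub>m e) = kernel_dim (x - 1\<^sub>m n)" using kx[of 1] one by simp
    finally show "kernel_dim (x - \<mu> \<cdot>\<^sub>m 1\<^sub>m n) \<le> kernel_dim (x - 1\<^sub>m n) + 2" .
  qed
  show "a \<in> {e * x | e x. e \<in> E_set n \<and> x \<in> X_set n}" using ax eE xX by blast
next
  fix a :: "'a mat" assume "a \<in> {e * x | e x. e \<in> E_set n \<and> x \<in> X_set n}"
  then obtain e x where a: "a = e * x" and eE: "e \<in> E_set n" and xX: "x \<in> X_set n" by blast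
  from eE obtain l where e: "e = m_mat l n" and l0: "l \<noteq> 0" unfolding E_set_def by blast
  have eC: "e \<in> carrier_mat n n" unfolding e by simp
  have e'C: "m_mat (inverse l) n \<in> carrier_mat n n" by simp
  have i1: "e * m_mat (inverse l) n = 1\<^sub>m n" unfolding e by (rule m_mat_inv[OF l0])
  have i2: "m_mat (inverse l) n * e = 1\<^sub>m n" using m_mat_inv[of "inverse l" n] l0 unfolding e by simp
  have ei: "invertible_mat e" by (rule invertible_intro[OF eC e'C i1 i2])
  have xC: "x \<in> carrier_mat n n" and xi: "invertible_mat x" using xX by (auto simp: X_set_def GL_set_def)
  show "a \<in> GL_set n" unfolding GL_set_def a using invertible_mult[OF eC xC ei xi] eC xC by simp
qed

end
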